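(* Let $L=\{<,\ldots\}$ be a countable first order language containing a binary relation symbol $<$, and let $T$ be a complete $L$-theory with Skolem functions in which $<$ is interpreted as a linear order. Suppose $T$ satisfies the regularity scheme. Let $M\models T$, let $\varphi(\bar{x},\bar{t})$ be an $L$-formula with $\bar{x}=(x_1,\ldots,x_n)$, and let $\bar{b}\in M$ with $|\bar{b}|=|\bar{t}|$ be such that $\varphi(\bar{x},\bar{b})$ is $\bar{x}$-unbounded in $M$. Let $\tau(\bar{u},\bar{s})$ be an $L$-term with $|\bar{u}|<n$, and let $a\in M$. Then $\varphi(\bar{x},\bar{b})\wedge B_{\tau}(\bar{x};a)$ is $\bar{x}$-unbounded in $M$.
   Context: "$T$ has Skolem functions" means that for every formula $\theta(y,\bar{x})$ there is a term $\tau(\bar{x})$ of $L$ with $T\models \forall\bar{x}(\exists y\,\theta(y,\bar{x})\to\theta(\tau(\bar{x}),\bar{x}))$. Tuple inequalities such as $\bar{s}<a$ mean every coordinate is $<a$. For $\bar{x}=(x_1,\ldots,x_n)$ and a formula $\chi(\bar{x})$ with parameters from a model $M$, $\chi(\bar{x})$ is $\bar{x}$-unbounded in $M$ if $M\models(\forall\alpha_1)(\exists x_1>\alpha_1)\cdots(\forall\alpha_n)(\exists x_n>\alpha_n)\chi(\bar{x})$; otherwise it is $\bar{x}$-bounded. $T$ satisfies the regularity scheme if for every $L$-formula $\varphi(\bar{x},\bar{y},\bar{t})$ (with $\bar{x}$ of any finite length), every model $M\models T$, every $y_0\in M$ and every $\bar{b}\in M$: if $(\exists\bar{y}<y_0)\varphi(\bar{x},\bar{y},\bar{b})$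 is $\bar{x}$-unbounded in $M$, then for some $\bar{y}_1<y_0$ in $M$, $\varphi(\bar{x},\bar{y}_1,\bar{b})$ is $\bar{x}$-unbounded in $M$. For a term $\tau(\bar{u},\bar{s})$ with $k=|\bar{u}|<n$, for integers $0<i_1<\cdots<i_{k+1}\leq n$ and an element $a$, let $A_{\tau}(x_{i_1},\ldots,x_{i_{k+1}};a)$ be the formula $(\forall\bar{s}<a)[\tau(x_{i_1},\ldots,x_{i_k},\bar{s})<x_{i_{k+1}}]$, and let $B_{\tau}(x_1,\ldots,x_n;a)$ be the conjunction of $A_{\tau}(x_{i_1},\ldots,x_{i_{k+1}};a)$ over all $0<i_1<\cdots<i_{k+1}\leq n$. *)

theory Defs
  imports Main "HOL-Library.Countable"
begin

datatype 'f trm = Var nat | Fn 'f "'f trm list"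

datatype ('f, 'r) fm =
    FF
  | Eq "'f trm" "'f trm"
  | Rel 'r "'f trm list"
  | Imp "('f, 'r) fm" "('f, 'r) fm"
  | All nat "('f, 'r) fm"

definition Neg :: "('f, 'r) fm \<Rightarrow> ('f, 'r) fm" where
  "Neg p = Imp p FF"

fun vars_trm :: "'f trm \<Rightarrow> nat set" where
  "vars_trm (Var n) = {n}"
| "vars_trm (Fn f ts) = (\<Union>t\<in>set ts. vars_trm t)"

fun fv :: "('f, 'r) fm \<Rightarrow> nat set" where
  "fv FF = {}"
| "fv (Eq s t) = vars_trm s \<union> vars_trm t"
| "fv (Rel r ts) = (\<Union>t\<in>set ts. vars_trm t)"
| "fv (Imp p q) = fv p \<union> fv q"
| "fv (All n p) = fv p - {n}"

fun wf_trm :: "('f \<Rightarrow> nat) \<Rightarrow> 'f trm \<Rightarrow> bool" where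
  "wf_trm arF (Var n) = True"
| "wf_trm arF (Fn f ts) = (length ts = arF f \<and> (\<forall>t\<in>set ts. wf_trm arF t))"

fun wf_fm :: "('f \<Rightarrow> nat) \<Rightarrow> ('r \<Rightarrow> nat) \<Rightarrow> ('f, 'r) fm \<Rightarrow> bool" where
  "wf_fm arF arR FF = True"
| "wf_fm arF arR (Eq s t) = (wf_trm arF s \<and> wf_trm arF t)"
| "wf_fm arF arR (Rel r ts) = (length ts = arR r \<and> (\<forall>t\<in>set ts. wf_trm arF t))"
| "wf_fm arF arR (Imp p q) = (wf_fm arF arR p \<and> wf_fm arF arR q)"
| "wf_fm arF arR (All n p) = wf_fm arF arR p"

definition sentence :: "('f \<Rightarrow> nat) \<Rightarrow> ('r \<Rightarrow> nat) \<Rightarrow> ('f, 'r) fm \<Rightarrow> bool" where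
  "sentence arF arR p \<longleftrightarrow> wf_fm arF arR p \<and> fv p = {}"

record ('a, 'f, 'r) struc =
  carr :: "'a set"
  fns :: "'f \<Rightarrow> 'a list \<Rightarrow> 'a"
  rls :: "'r \<Rightarrow> 'a list \<Rightarrow> bool"

definition is_struc :: "('f \<Rightarrow> nat) \<Rightarrow> ('a, 'f, 'r, 'z) struc_scheme \<Rightarrow> bool" where
  "is_struc arF M \<longleftrightarrow> carr M \<noteq> {} \<and>
     (\<forall>f xs. length xs = arF f \<and> set xs \<subseteq> carr M \<longrightarrow> fns M f xs \<in> carr M)"

fun eval :: "('a, 'f, 'r, 'z) struc_scheme \<Rightarrow> (nat \<Rightarrow> 'a) \<Rightarrow> 'f trm \<Rightarrow> 'a" where
  "eval M e (Var n) = e n"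
| "eval M e (Fn f ts) = fns M f (map (eval M e) ts)"

fun sat :: "('a, 'f, 'r, 'z) struc_scheme \<Rightarrow> (nat \<Rightarrow> 'a) \<Rightarrow> ('f, 'r) fm \<Rightarrow> bool" where
  "sat M e FF = False"
| "sat M e (Eq s t) = (eval M e s = eval M e t)"
| "sat M e (Rel r ts) = rls M r (map (eval M e) ts)"
| "sat M e (Imp p q) = (sat M e p \<longrightarrow> sat M e q)"
| "sat M e (All n p) = (\<forall>a\<in>carr M. sat M (e(n := a)) p)"

definition asg_in :: "('a, 'f, 'r, 'z) struc_scheme \<Rightarrow> (nat \<Rightarrow> 'a) \<Rightarrow> bool" where
  "asg_in M e \<longleftrightarrow> (\<forall>v. e v \<in> carr M)"

definition asg :: "('a, 'f, 'r, 'z) struc_scheme \<Rightarrow> nat list \<Rightarrow> 'a list \<Rightarrow> nat \<Rightarrow> 'a" where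
  "asg M vs as v = (case map_of (zip vs as) v of Some a \<Rightarrow> a | None \<Rightarrow> (SOME d. d \<in> carr M))"

definition holds :: "('a, 'f, 'r, 'z) struc_scheme \<Rightarrow> ('f, 'r) fm \<Rightarrow> nat list \<Rightarrow> 'a list \<Rightarrow> bool" where
  "holds M p vs as \<longleftrightarrow> sat M (asg M vs as) p"

definition evalv :: "('a, 'f, 'r, 'z) struc_scheme \<Rightarrow> 'f trm \<Rightarrow> nat list \<Rightarrow> 'a list \<Rightarrow> 'a" where
  "evalv M t vs as = eval M (asg M vs as) t"

definition is_model :: "('f \<Rightarrow> nat) \<Rightarrow> ('r \<Rightarrow> nat) \<Rightarrow> ('f, 'r) fm set
    \<Rightarrow> ('a, 'f, 'r) struc \<Rightarrow> bool" where
  "is_model arF arR T M \<longleftrightarrow> is_struc arF M \<and>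
     (\<forall>p\<in>T. \<forall>e. asg_in M e \<longrightarrow> sat M e p)"

definition lessM :: "('a, 'f, 'r, 'z) struc_scheme \<Rightarrow> 'r \<Rightarrow> 'a \<Rightarrow> 'a \<Rightarrow> bool" where
  "lessM M lt x y \<longleftrightarrow> rls M lt [x, y]"

section \<open>Properties of theories (models range over structures on the type 'a)\<close>

definition complete_theory :: "'a itself \<Rightarrow> ('f \<Rightarrow> nat) \<Rightarrow> ('r \<Rightarrow> nat) \<Rightarrow> ('f, 'r) fm set \<Rightarrow> bool" where
  "complete_theory _ arF arR T \<longleftrightarrow>
     (\<forall>p\<in>T. sentence arF arR p) \<and>
     (\<exists>M :: ('a, 'f, 'r) struc. is_model arF arR T M) \<and>
     (\<forall>p. sentence arF arR p \<longrightarrow>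
        (\<forall>M :: ('a, 'f, 'r) struc. is_model arF arR T M \<longrightarrow> (\<forall>e. asg_in M e \<longrightarrow> sat M e p)) \<or>
        (\<forall>M :: ('a, 'f, 'r) struc. is_model arF arR T M \<longrightarrow> (\<forall>e. asg_in M e \<longrightarrow> sat M e (Neg p))))"

definition lt_linear :: "'a itself \<Rightarrow> ('f \<Rightarrow> nat) \<Rightarrow> ('r \<Rightarrow> nat) \<Rightarrow> ('f, 'r) fm set \<Rightarrow> 'r \<Rightarrow> bool" where
  "lt_linear _ arF arR T lt \<longleftrightarrow> arR lt = 2 \<and>
     (\<forall>M :: ('a, 'f, 'r) struc. is_model arF arR T M \<longrightarrow>
        (\<forall>x\<in>carr M. \<not> lessM M lt x x) \<and>
        (\<forall>x\<in>carr M. \<forall>y\<in>carr M. \<forall>z\<in>carr M. lessM M lt x y \<and> lessM M lt y z \<longrightarrow> lessM M lt x z) \<and>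
        (\<forall>x\<in>carr M. \<forall>y\<in>carr M. lessM M lt x y \<or> x = y \<or> lessM M lt y x))"

definition skolem_functions :: "'a itself \<Rightarrow> ('f \<Rightarrow> nat) \<Rightarrow> ('r \<Rightarrow> nat) \<Rightarrow> ('f, 'r) fm set \<Rightarrow> bool" where
  "skolem_functions _ arF arR T \<longleftrightarrow>
     (\<forall>\<theta> y xs. wf_fm arF arR \<theta> \<and> y \<notin> set xs \<and> fv \<theta> \<subseteq> insert y (set xs) \<longrightarrow>
        (\<exists>\<tau>. wf_trm arF \<tau> \<and> vars_trm \<tau> \<subseteq> set xs \<and>
           (\<forall>M :: ('a, 'f, 'r) struc. is_model arF arR T M \<longrightarrow>
              (\<forall>e. asg_in M e \<longrightarrow>
                 (\<exists>c\<in>carr M. sat M (e(y := c)) \<theta>) \<longrightarrow> sat M (e(y := eval M e \<tau>)) \<theta>))))"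

fun unbounded :: "('a, 'f, 'r, 'z) struc_scheme \<Rightarrow> 'r \<Rightarrow> nat \<Rightarrow> ('a list \<Rightarrow> bool) \<Rightarrow> bool" where
  "unbounded M lt 0 P = P []"
| "unbounded M lt (Suc n) P =
     (\<forall>\<alpha>\<in>carr M. \<exists>x\<in>carr M. lessM M lt \<alpha> x \<and> unbounded M lt n (\<lambda>xs. P (x # xs)))"

definition below :: "('a, 'f, 'r, 'z) struc_scheme \<Rightarrow> 'r \<Rightarrow> 'a list \<Rightarrow> 'a \<Rightarrow> bool" where
  "below M lt cs a \<longleftrightarrow> (\<forall>c\<in>set cs. lessM M lt c a)"

definition regularity_scheme :: "'a itself \<Rightarrow> ('f \<Rightarrow> nat) \<Rightarrow> ('r \<Rightarrow> nat) \<Rightarrow> ('f, 'r) fm set \<Rightarrow> 'r \<Rightarrow> bool" where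
  "regularity_scheme _ arF arR T lt \<longleftrightarrow>
     (\<forall>\<phi> xs ys ts. wf_fm arF arR \<phi> \<and> distinct (xs @ ys @ ts) \<and> fv \<phi> \<subseteq> set (xs @ ys @ ts) \<longrightarrow>
       (\<forall>M :: ('a, 'f, 'r) struc. is_model arF arR T M \<longrightarrow>
         (\<forall>y0\<in>carr M. \<forall>bs. length bs = length ts \<and> set bs \<subseteq> carr M \<longrightarrow>
            unbounded M lt (length xs) (\<lambda>as. \<exists>cs. length cs = length ys \<and> set cs \<subseteq> carr M \<and>
                 below M lt cs y0 \<and> holds M \<phi> (xs @ ys @ ts) (as @ cs @ bs)) \<longrightarrow>
            (\<exists>cs. length cs = length ys \<and> set cs \<subseteq> carr M \<and> below M lt cs y0 \<and>
                 unbounded M lt (length xs) (\<lambda>as. holds M \<phi> (xs @ ys @ ts) (as @ cs @ bs))))))"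

text \<open>B_tau(xs; a) evaluated at the tuple xv (n = length xv), for a term tau(us, ss)
  with k = length us: for all 0 <= i_0 < ... < i_k < n (0-based indices),
  (forall ss < a) tau(xv_{i_0},...,xv_{i_{k-1}}, ss) < xv_{i_k}.\<close>
definition B_tau :: "('a, 'f, 'r, 'z) struc_scheme \<Rightarrow> 'r \<Rightarrow> 'f trm \<Rightarrow> nat list \<Rightarrow> nat list
    \<Rightarrow> 'a \<Rightarrow> 'a list \<Rightarrow> bool" where
  "B_tau M lt \<tau> us ss a xv \<longleftrightarrow>
     (\<forall>idx. strict_mono_on {..length us} idx \<and> idx (length us) < length xv \<longrightarrow>
        (\<forall>sv. length sv = length ss \<and> set sv \<subseteq> carr M \<and> below M lt sv a \<longrightarrow>
           lessM M lt (evalv M \<tau> (us @ ss) (map (\<lambda>j. xv ! idx j) [0..<length us] @ sv))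
                      (xv ! idx (length us))))"

end

theory Submission
  imports Defs
begin


fun subst_trm :: "(nat \<Rightarrow> 'f trm) \<Rightarrow> 'f trm \<Rightarrow> 'f trm" where
  "subst_trm \<sigma> (Var n) = \<sigma> n"
| "subst_trm \<sigma> (Fn f ts) = Fn f (map (subst_trm \<sigma>) ts)"

lemma eval_subst: "eval M e (subst_trm \<sigma> t) = eval M (\<lambda>v. eval M e (\<sigma> v)) t"
proof (induction t)
  case (Fn f ts)
  have "map (eval M e \<circ> subst_trm \<sigma>) ts = map (eval M (\<lambda>v. eval M e (\<sigma> v))) ts"
    using Fn by (auto intro!: map_cong)
  then show ?case by (metis eval.simps(2) subst_trm.simps(2) map_map)
qed simp

lemma eval_cong: "(\<forall>v\<in>vars_trm t. e v = e' v) \<Longrightarrow> eval M e t = eval M e' t"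
  by (induction t) (auto intro!: map_cong arg_cong[where f="fns M _"])

lemma sat_cong: "(\<forall>v\<in>fv p. e v = e' v) \<Longrightarrow> sat M e p = sat M e' p"
proof (induction p arbitrary: e e')
  case (Eq s t) then show ?case using eval_cong[of s e e' M] eval_cong[of t e e' M] by simp
next
  case (Rel r ts)
  have "map (eval M e) ts = map (eval M e') ts"
    using Rel by (auto intro!: map_cong eval_cong)
  then show ?case by (metis sat.simps(3))
next
  case (Imp p q)
  have "sat M e p = sat M e' p" using Imp.prems by (intro Imp.IH(1)) auto
  moreover have "sat M e q = sat M e' q" using Imp.prems by (intro Imp.IH(2)) auto
  ultimately show ?case by simp
next
  case (All n p)
  have "\<And>a. sat M (e(n := a)) p = sat M (e'(n := a)) p"
    using All.prems by (intro All.IH) auto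
  then show ?case by simp
qed simp

lemma eval_in: "is_struc arF M \<Longrightarrow> wf_trm arF t \<Longrightarrow> (\<forall>v. e v \<in> carr M) \<Longrightarrow> eval M e t \<in> carr M"
proof (induction t)
  case (Var x) then show ?case by simp
next
  case (Fn f ts)
  have "set (map (eval M e) ts) \<subseteq> carr M" using Fn by auto
  then show ?case using Fn.prems unfolding is_struc_def by simp
qed

lemma wf_subst: "wf_trm arF t \<Longrightarrow> (\<forall>v. wf_trm arF (\<sigma> v)) \<Longrightarrow> wf_trm arF (subst_trm \<sigma> t)"
  by (induction t) auto

lemma vars_subst: "vars_trm (subst_trm \<sigma> t) = (\<Union>v\<in>vars_trm t. vars_trm (\<sigma> v))"
  by (induction t) auto

lemma asg_nth: "distinct vs \<Longrightarrow> length vs = length as \<Longrightarrow> i < length vs \<Longrightarrow> asg M vs as (vs!i) = as!i"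
  by (simp add: asg_def map_of_zip_nth)

lemma asg_in: "carr M \<noteq> {} \<Longrightarrow> set as \<subseteq> carr M \<Longrightarrow> asg M vs as v \<in> carr M"
proof -
  assume ne: "carr M \<noteq> {}" and s: "set as \<subseteq> carr M"
  show ?thesis
  proof (cases "map_of (zip vs as) v")
    case None then show ?thesis using ne by (simp add: asg_def) (meson ex_in_conv someI_ex)
  next
    case (Some b)
    then have "(v, b) \<in> set (zip vs as)" by (rule map_of_SomeD)
    then have "b \<in> set as" by (rule set_zip_rightD)
    then show ?thesis using Some s by (auto simp: asg_def)
  qed
qed

lemma unb_mono: "unbounded M lt n P \<Longrightarrow> (\<And>as. length as = n \<Longrightarrow> set as \<subseteq> carr M \<Longrightarrow> P as \<Longrightarrow> Q as)
  \<Longrightarrow> unbounded M lt n Q"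
proof (induction n arbitrary: P Q)
  case 0 then show ?case by simp
next
  case (Suc n)
  show ?case unfolding unbounded.simps
  proof
    fix \<alpha> assume "\<alpha> \<in> carr M"
    then obtain x where x: "x \<in> carr M" "lessM M lt \<alpha> x" "unbounded M lt n (\<lambda>xs. P (x # xs))"
      using Suc.prems(1) by auto
    have "unbounded M lt n (\<lambda>xs. Q (x # xs))"
      using x(3) by (rule Suc.IH) (use Suc.prems(2) x(1) in auto)
    then show "\<exists>x\<in>carr M. lessM M lt \<alpha> x \<and> unbounded M lt n (\<lambda>xs. Q (x # xs))" using x by auto
  qed
qed

lemma unb_ex: "carr M \<noteq> {} \<Longrightarrow> unbounded M lt n P \<Longrightarrow> \<exists>as. length as = n \<and> set as \<subseteq> carr M \<and> P as"
proof (induction n arbitrary: P)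
  case 0 then show ?case by simp
next
  case (Suc n)
  obtain d where "d \<in> carr M" using Suc.prems by auto
  then obtain x where x: "x \<in> carr M" "unbounded M lt n (\<lambda>xs. P (x # xs))"
    using Suc.prems(2) by auto
  from Suc.IH[OF Suc.prems(1) x(2)] obtain xs where "length xs = n" "set xs \<subseteq> carr M" "P (x#xs)" by auto
  then show ?case using x(1) by (intro exI[of _ "x#xs"]) auto
qed

lemma unb_disj:
  assumes tr: "\<forall>x\<in>carr M. \<forall>y\<in>carr M. \<forall>z\<in>carr M. lessM M lt x y \<and> lessM M lt y z \<longrightarrow> lessM M lt x z"
    and tot: "\<forall>x\<in>carr M. \<forall>y\<in>carr M. lessM M lt x y \<or> x = y \<or> lessM M lt y x"
  shows "unbounded M lt n (\<lambda>as. P as \<or> Q as) \<Longrightarrow> unbounded M lt n P \<or> unbounded M lt n Q"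
proof (induction n arbitrary: P Q)
  case 0 then show ?case by simp
next
  case (Suc n)
  show ?case
  proof (rule ccontr)
    assume "\<not> ?case"
    then obtain a1 a2 where a: "a1 \<in> carr M" "a2 \<in> carr M"
      and h1: "\<forall>x\<in>carr M. lessM M lt a1 x \<longrightarrow> \<not> unbounded M lt n (\<lambda>xs. P (x # xs))"
      and h2: "\<forall>x\<in>carr M. lessM M lt a2 x \<longrightarrow> \<not> unbounded M lt n (\<lambda>xs. Q (x # xs))"
      by auto
    define \<alpha> where "\<alpha> = (if lessM M lt a1 a2 then a2 else a1)"
    have "\<alpha> \<in> carr M" using a by (simp add: \<alpha>_def)
    then obtain x where x: "x \<in> carr M" "lessM M lt \<alpha> x"
      "unbounded M lt n (\<lambda>xs. P (x # xs) \<or> Q (x # xs))" using Suc.prems by auto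
    have trr: "\<And>p q r. p \<in> carr M \<Longrightarrow> q \<in> carr M \<Longrightarrow> r \<in> carr M \<Longrightarrow> lessM M lt p q \<Longrightarrow> lessM M lt q r \<Longrightarrow> lessM M lt p r"
      using tr by blast
    have l1: "lessM M lt a1 x"
    proof (cases "lessM M lt a1 a2")
      case True
      then have "lessM M lt a2 x" using x(2) by (simp add: \<alpha>_def)
      then show ?thesis using trr[OF a(1) a(2) x(1) True] by simp
    next
      case False then show ?thesis using x(2) by (simp add: \<alpha>_def)
    qed
    have l2: "lessM M lt a2 x"
    proof (cases "lessM M lt a1 a2")
      case True then show ?thesis using x(2) by (simp add: \<alpha>_def)
    next
      case False
      then have al: "lessM M lt a1 x" using x(2) by (simp add: \<alpha>_def)
      have "a1 = a2 \<or> lessM M lt a2 a1" using tot a False by blast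
      then show ?thesis
      proof
        assume "a1 = a2" then show ?thesis using al by simp
      next
        assume "lessM M lt a2 a1" then show ?thesis using trr[OF a(2) a(1) x(1)] al by simp
      qed
    qed
    from Suc.IH[OF x(3)] show False using h1 h2 l1 l2 x(1) by auto
  qed
qed

lemma unb_fin:
  assumes tr: "\<forall>x\<in>carr M. \<forall>y\<in>carr M. \<forall>z\<in>carr M. lessM M lt x y \<and> lessM M lt y z \<longrightarrow> lessM M lt x z"
    and tot: "\<forall>x\<in>carr M. \<forall>y\<in>carr M. lessM M lt x y \<or> x = y \<or> lessM M lt y x"
    and ne: "carr M \<noteq> {}"
  shows "finite I \<Longrightarrow> unbounded M lt n (\<lambda>as. \<exists>i\<in>I. P i as) \<Longrightarrow> \<exists>i\<in>I. unbounded M lt n (P i)"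
proof (induction I rule: finite_induct)
  case empty then show ?case using unb_ex[OF ne] by fastforce
next
  case (insert j F)
  have "unbounded M lt n (\<lambda>as. P j as \<or> (\<exists>i\<in>F. P i as))"
    using insert.prems by (rule unb_mono) auto
  then have "unbounded M lt n (P j) \<or> unbounded M lt n (\<lambda>as. \<exists>i\<in>F. P i as)"
    by (rule unb_disj[OF tr tot])
  then show ?case using insert.IH by auto
qed

lemma unb_game:
  assumes ne: "carr M \<noteq> {}"
  shows "j < n \<Longrightarrow> (\<And>l. length l = j \<Longrightarrow> set l \<subseteq> carr M \<Longrightarrow> g l \<in> carr M)
   \<Longrightarrow> (\<And>as. length as = n \<Longrightarrow> set as \<subseteq> carr M \<Longrightarrow> P as \<Longrightarrow> \<not> lessM M lt (g (take j as)) (as ! j))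
   \<Longrightarrow> \<not> unbounded M lt n P"
proof (induction j arbitrary: n P g)
  case 0
  then obtain m where n: "n = Suc m" by (cases n) auto
  show ?case
  proof
    assume u: "unbounded M lt n P"
    have "g [] \<in> carr M" using 0 by auto
    then obtain x where x: "x \<in> carr M" "lessM M lt (g []) x" "unbounded M lt m (\<lambda>xs. P (x # xs))"
      using u n by auto
    obtain xs where "length xs = m" "set xs \<subseteq> carr M" "P (x#xs)" using unb_ex[OF ne x(3)] by auto
    then show False using 0(3)[of "x#xs"] x n by auto
  qed
next
  case (Suc j)
  then obtain m where n: "n = Suc m" by (cases n) auto
  show ?case
  proof
    assume u: "unbounded M lt n P"
    obtain d where "d \<in> carr M" using ne by auto
    then obtain x where x: "x \<in> carr M" "unbounded M lt m (\<lambda>xs. P (x # xs))"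
      using u n by auto
    have "\<not> unbounded M lt m (\<lambda>xs. P (x # xs))"
    proof (rule Suc.IH[where g="\<lambda>l. g (x # l)"])
      show "j < m" using Suc n by simp
      show "\<And>l. length l = j \<Longrightarrow> set l \<subseteq> carr M \<Longrightarrow> g (x # l) \<in> carr M"
        using Suc.prems(2) x(1) by auto
      show "\<And>as. length as = m \<Longrightarrow> set as \<subseteq> carr M \<Longrightarrow> P (x # as) \<Longrightarrow> \<not> lessM M lt (g (x # take j as)) (as ! j)"
        using Suc.prems(3) x(1) n by (metis Suc_length_conv list.set_intros insert_subset list.simps(15) nth_Cons_Suc take_Suc_Cons)
    qed
    then show False using x by simp
  qed
qed


definition Conj :: "('f, 'r) fm \<Rightarrow> ('f, 'r) fm \<Rightarrow> ('f, 'r) fm" where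
  "Conj p q = Neg (Imp p (Neg q))"

lemma sat_Conj: "sat M e (Conj p q) = (sat M e p \<and> sat M e q)"
  by (simp add: Conj_def Neg_def)

lemma sat_Neg: "sat M e (Neg p) = (\<not> sat M e p)"
  by (simp add: Neg_def)

lemma fv_Conj: "fv (Conj p q) = fv p \<union> fv q" by (simp add: Conj_def Neg_def)
lemma fv_Neg: "fv (Neg p) = fv p" by (simp add: Neg_def)
lemma wf_Conj: "wf_fm arF arR (Conj p q) = (wf_fm arF arR p \<and> wf_fm arF arR q)" by (simp add: Conj_def Neg_def)
lemma wf_Neg: "wf_fm arF arR (Neg p) = wf_fm arF arR p" by (simp add: Neg_def)

theorem lemma2p4:
  fixes arF :: "'f::countable \<Rightarrow> nat" and arR :: "'r::countable \<Rightarrow> nat"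
    and lt :: 'r and T :: "('f, 'r) fm set"
    and M :: "('a, 'f, 'r) struc"
    and \<phi> :: "('f, 'r) fm" and xs ts :: "nat list" and bs :: "'a list"
    and \<tau> :: "'f trm" and us ss :: "nat list" and a :: 'a
  assumes "complete_theory TYPE('a) arF arR T"
    and "skolem_functions TYPE('a) arF arR T"
    and "lt_linear TYPE('a) arF arR T lt"
    and "regularity_scheme TYPE('a) arF arR T lt"
    and "is_model arF arR T M"
    and "wf_fm arF arR \<phi>" and "distinct (xs @ ts)" and "fv \<phi> \<subseteq> set (xs @ ts)"
    and "length bs = length ts" and "set bs \<subseteq> carr M"
    and "unbounded M lt (length xs) (\<lambda>as. holds M \<phi> (xs @ ts) (as @ bs))"
    and "wf_trm arF \<tau>" and "distinct (us @ ss)" and "vars_trm \<tau> \<subseteq> set (us @ ss)"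
    and "length us < length xs"
    and "a \<in> carr M"
  shows "unbounded M lt (length xs)
           (\<lambda>as. holds M \<phi> (xs @ ts) (as @ bs) \<and> B_tau M lt \<tau> us ss a as)"
proof -
  note lin = assms(3)[unfolded lt_linear_def]
  have ar2: "arR lt = 2" using conjunct1[OF lin] .
  note lin2 = conjunct2[OF lin, rule_format, OF assms(5)]
  have tr: "\<forall>x\<in>carr M. \<forall>y\<in>carr M. \<forall>z\<in>carr M. lessM M lt x y \<and> lessM M lt y z \<longrightarrow> lessM M lt x z"
    using lin2 by (rule conjE) (erule conjE)
  have tot: "\<forall>x\<in>carr M. \<forall>y\<in>carr M. lessM M lt x y \<or> x = y \<or> lessM M lt y x"
    using lin2 by (rule conjE) (erule conjE)
  have struc: "is_struc arF M" using assms(5) by (simp add: is_model_def)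
  then have ne: "carr M \<noteq> {}" by (simp add: is_struc_def)
  define n where "n = length xs"
  define k where "k = length us"
  have kn: "k < n" using assms(15) by (simp add: n_def k_def)
  define Phi where "Phi as = holds M \<phi> (xs @ ts) (as @ bs)" for as
  define I where "I = {l. length l = Suc k \<and> set l \<subseteq> {..<n} \<and> (\<forall>j<k. l!j < l!k)}"
  define Gv where "Gv l l' cs = evalv M \<tau> (us @ ss) (map (\<lambda>i. l' ! (l!i)) [0..<k] @ cs)" for l l' cs
  define P where "P l as = (Phi as \<and> (\<exists>sv. length sv = length ss \<and> set sv \<subseteq> carr M \<and> below M lt sv a \<and>
      \<not> lessM M lt (Gv l as sv) (as ! (l!k))))" for l as
  have finI: "finite I"
  proof -
    have "I \<subseteq> {l. set l \<subseteq> {..<n} \<and> length l = Suc k}" by (auto simp: I_def)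
    moreover have "finite {l. set l \<subseteq> {..<n} \<and> length l = Suc k}"
      by (rule finite_lists_length_eq) simp
    ultimately show ?thesis by (rule finite_subset)
  qed
  have noP: "\<not> unbounded M lt n (P l)" if lI: "l \<in> I" for l
  proof
    assume uP: "unbounded M lt n (P l)"
    from lI have lenl: "length l = Suc k" and lsub: "set l \<subseteq> {..<n}" and lmono: "\<forall>j<k. l!j < l!k"
      by (auto simp: I_def)
    have lln: "l!j < n" if "j \<le> k" for j
    proof -
      have "l!j \<in> set l" using lenl that by (intro nth_mem) simp
      then show ?thesis using lsub by auto
    qed
    have dxs: "distinct xs" and dts: "distinct ts" and disj: "set xs \<inter> set ts = {}"
      using assms(7) by auto
    define N where "N = Suc (sum_list xs + sum_list ts)"
    define ys where "ys = map (\<lambda>i. N + i) [0..<length ss]"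
    have lenys: "length ys = length ss" by (simp add: ys_def)
    have xsN: "v < N" if "v \<in> set xs" for v
      using member_le_sum_list[OF that] by (simp add: N_def)
    have tsN: "v < N" if "v \<in> set ts" for v
      using member_le_sum_list[OF that] by (simp add: N_def)
    have ysN: "N \<le> v" if "v \<in> set ys" for v using that by (auto simp: ys_def)
    have dys: "distinct ys" by (simp add: ys_def distinct_map inj_on_def)
    have dist: "distinct (xs @ ys @ ts)"
    proof -
      have "set xs \<inter> set ys = {}" using xsN ysN by (meson disjoint_iff not_le)
      moreover have "set ys \<inter> set ts = {}" using tsN ysN by (meson disjoint_iff not_le)
      ultimately show ?thesis using dxs dts dys disj by auto
    qed
    define W :: "'f trm list" where "W = map (\<lambda>j. Var (xs!(l!j))) [0..<k] @ map Var ys"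
    define \<sigma> :: "nat \<Rightarrow> 'f trm" where "\<sigma> v = (case map_of (zip (us@ss) W) v of Some t \<Rightarrow> t | None \<Rightarrow> Var v)" for v
    have lenW: "length (us@ss) = length W" by (simp add: W_def k_def lenys)
    have \<sigma>nth: "\<sigma> ((us@ss)!i) = W!i" if "i < length (us@ss)" for i
      using map_of_zip_nth[OF lenW assms(13)] that lenW by (simp add: \<sigma>_def)
    have Wvar: "\<exists>w. t = Var w" if "t \<in> set W" for t using that by (auto simp: W_def)
    have \<sigma>var: "\<exists>w. \<sigma> v = Var w" for v
    proof (cases "map_of (zip (us@ss) W) v")
      case None then show ?thesis by (simp add: \<sigma>_def)
    next
      case (Some t)
      then have "(v, t) \<in> set (zip (us@ss) W)" by (rule map_of_SomeD)
      then have "t \<in> set W" by (rule set_zip_rightD)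
      then show ?thesis using Some Wvar by (simp add: \<sigma>_def)
    qed
    define \<tau>l where "\<tau>l = subst_trm \<sigma> \<tau>"
    define \<psi> where "\<psi> = Conj \<phi> (Neg (Rel lt [\<tau>l, Var (xs ! (l!k))]))"
    have wft: "wf_trm arF \<tau>l" unfolding \<tau>l_def
    proof (rule wf_subst[OF assms(12)])
      show "\<forall>v. wf_trm arF (\<sigma> v)" using \<sigma>var by (metis wf_trm.simps(1))
    qed
    have vt: "vars_trm \<tau>l \<subseteq> set xs \<union> set ys"
    proof
      fix w assume "w \<in> vars_trm \<tau>l"
      then obtain v where v: "v \<in> vars_trm \<tau>" "w \<in> vars_trm (\<sigma> v)" by (auto simp: \<tau>l_def vars_subst)
      then have "v \<in> set (us@ss)" using assms(14) by auto
      then obtain i where i: "i < length (us@ss)" "v = (us@ss)!i" by (metis in_set_conv_nth)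
      then have sv: "\<sigma> v = W!i" using \<sigma>nth by simp
      show "w \<in> set xs \<union> set ys"
      proof (cases "i < k")
        case True
        then have "W!i = Var (xs!(l!i))" by (simp add: W_def nth_append)
        moreover have "xs!(l!i) \<in> set xs" using lln[of i] True by (simp add: n_def)
        ultimately show ?thesis using v sv by simp
      next
        case False
        then have "W!i = Var (ys!(i-k))" using i lenW by (simp add: W_def nth_append)
        moreover have "ys!(i-k) \<in> set ys" using i False lenys by (simp add: k_def)
        ultimately show ?thesis using v sv by simp
      qed
    qed
    have lkn: "l!k < n" using lln by simp
    have wfpsi: "wf_fm arF arR \<psi>" using assms(6) wft ar2 by (simp add: \<psi>_def wf_Conj wf_Neg)
    have fvpsi: "fv \<psi> \<subseteq> set (xs @ ys @ ts)"
      using assms(8) vt lkn by (auto simp: \<psi>_def fv_Conj fv_Neg n_def)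
    have key: "holds M \<psi> (xs@ys@ts) (as@cs@bs) \<longleftrightarrow> Phi as \<and> \<not> lessM M lt (Gv l as cs) (as!(l!k))"
      if las: "length as = n" and lcs: "length cs = length ss" for as cs
    proof -
      define e where "e = asg M (xs@ys@ts) (as@cs@bs)"
      have len3: "length (xs@ys@ts) = length (as@cs@bs)" using las lcs lenys assms(9) by (simp add: n_def)
      have e_xs: "e (xs!i) = as!i" if "i < n" for i
        using asg_nth[OF dist len3, of i M] that las by (simp add: e_def nth_append n_def)
      have e_ys: "e (ys!j) = cs!j" if "j < length ss" for j
        using asg_nth[OF dist len3, of "n + j" M] that las lcs lenys by (simp add: e_def nth_append n_def)
      have e_ts: "e (ts!j) = bs!j" if "j < length ts" for j
        using asg_nth[OF dist len3, of "n + length ss + j" M] that las lcs lenys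
        by (simp add: e_def nth_append n_def)
      have len2: "length (xs@ts) = length (as@bs)" using las assms(9) by (simp add: n_def)
      have dxt: "distinct (xs@ts)" using assms(7) .
      have sphi: "sat M e \<phi> = Phi as"
        unfolding Phi_def holds_def
      proof (rule sat_cong, rule ballI)
        fix v assume "v \<in> fv \<phi>"
        then have "v \<in> set xs \<or> v \<in> set ts" using assms(8) by auto
        then show "e v = asg M (xs @ ts) (as @ bs) v"
        proof
          assume "v \<in> set xs"
          then obtain i where i: "i < length xs" "v = xs!i" by (auto simp: in_set_conv_nth)
          then show ?thesis using e_xs[of i] asg_nth[OF dxt len2, of i M] las
            by (simp add: nth_append n_def)
        next
          assume "v \<in> set ts"
          then obtain i where i: "i < length ts" "v = ts!i" by (auto simp: in_set_conv_nth)
          then show ?thesis using e_ts[of i] asg_nth[OF dxt len2, of "length xs + i" M] las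
            by (simp add: nth_append n_def)
        qed
      qed
      define L where "L = map (\<lambda>i. as ! (l!i)) [0..<k]"
      have lenL: "length (us@ss) = length (L@cs)" using lcs by (simp add: L_def k_def)
      have etau: "eval M e \<tau>l = Gv l as cs"
        unfolding \<tau>l_def eval_subst Gv_def evalv_def L_def[symmetric]
      proof (rule eval_cong, rule ballI)
        fix v assume "v \<in> vars_trm \<tau>"
        then have "v \<in> set (us@ss)" using assms(14) by auto
        then obtain i where i: "i < length (us@ss)" "v = (us@ss)!i" by (metis in_set_conv_nth)
        have rhs: "asg M (us@ss) (L@cs) v = (L@cs)!i"
          using asg_nth[OF assms(13) lenL i(1)] i(2) by simp
        show "eval M e (\<sigma> v) = asg M (us @ ss) (L @ cs) v"
        proof (cases "i < k")
          case True
          then have "W!i = Var (xs!(l!i))" by (simp add: W_def nth_append)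
          moreover have "e (xs!(l!i)) = as!(l!i)" using e_xs lln[of i] True by simp
          ultimately show ?thesis using rhs \<sigma>nth[OF i(1)] i(2) True by (simp add: nth_append L_def)
        next
          case False
          then have "W!i = Var (ys!(i-k))" using i lenW by (simp add: W_def nth_append)
          moreover have "e (ys!(i-k)) = cs!(i-k)" using e_ys i False by (simp add: k_def)
          ultimately show ?thesis using rhs \<sigma>nth[OF i(1)] i(2) False by (simp add: nth_append L_def)
        qed
      qed
      have "holds M \<psi> (xs@ys@ts) (as@cs@bs) = sat M e \<psi>" by (simp add: holds_def e_def)
      also have "\<dots> = (sat M e \<phi> \<and> \<not> lessM M lt (eval M e \<tau>l) (e (xs!(l!k))))"
        by (simp add: \<psi>_def sat_Conj sat_Neg lessM_def)
      also have "\<dots> = (Phi as \<and> \<not> lessM M lt (Gv l as cs) (as!(l!k)))"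
        using sphi etau e_xs[OF lkn] by simp
      finally show ?thesis .
    qed
    have prem: "wf_fm arF arR \<psi> \<and> distinct (xs @ ys @ ts) \<and> fv \<psi> \<subseteq> set (xs @ ys @ ts)"
      using wfpsi dist fvpsi by blast
    have bsprem: "length bs = length ts \<and> set bs \<subseteq> carr M" using assms(9,10) by blast
    have unbprem: "unbounded M lt (length xs) (\<lambda>as. \<exists>cs. length cs = length ys \<and> set cs \<subseteq> carr M \<and>
                 below M lt cs a \<and> holds M \<psi> (xs @ ys @ ts) (as @ cs @ bs))"
      using uP[unfolded n_def]
    proof (rule unb_mono)
      fix as assume las: "length as = length xs" and "P l as"
      then obtain sv where sv: "length sv = length ss" "set sv \<subseteq> carr M" "below M lt sv a"
        "\<not> lessM M lt (Gv l as sv) (as ! (l!k))" and ph: "Phi as" by (auto simp: P_def)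
      have "holds M \<psi> (xs @ ys @ ts) (as @ sv @ bs)" using key[of as sv] las sv ph by (simp add: n_def)
      then show "\<exists>cs. length cs = length ys \<and> set cs \<subseteq> carr M \<and>
                 below M lt cs a \<and> holds M \<psi> (xs @ ys @ ts) (as @ cs @ bs)"
        using sv lenys by (intro exI[of _ sv]) simp
    qed
    note R = assms(4)[unfolded regularity_scheme_def, THEN spec[of _ \<psi>], THEN spec[of _ xs],
      THEN spec[of _ ys], THEN spec[of _ ts], THEN mp, OF prem, THEN spec[of _ M], THEN mp, OF assms(5),
      THEN bspec, OF assms(16), THEN spec[of _ bs], THEN mp, OF bsprem, THEN mp, OF unbprem]
    then obtain cs where cs: "length cs = length ys" "set cs \<subseteq> carr M" "below M lt cs a"
      and ucs: "unbounded M lt (length xs) (\<lambda>as. holds M \<psi> (xs @ ys @ ts) (as @ cs @ bs))"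
      by blast
    have "\<not> unbounded M lt n (\<lambda>as. holds M \<psi> (xs @ ys @ ts) (as @ cs @ bs))"
    proof (rule unb_game[OF ne lkn, where g = "\<lambda>l'. Gv l l' cs"])
      fix l' :: "'a list" assume ll': "length l' = l!k" and sl': "set l' \<subseteq> carr M"
      have "set (map (\<lambda>i. l' ! (l!i)) [0..<k] @ cs) \<subseteq> carr M"
      proof -
        have "l' ! (l!i) \<in> carr M" if "i < k" for i
          using lmono that ll' sl' by (metis nth_mem subsetD)
        then show ?thesis using cs(2) by auto
      qed
      then show "Gv l l' cs \<in> carr M"
        unfolding Gv_def evalv_def by (intro eval_in[OF struc assms(12)] allI asg_in[OF ne])
    next
      fix as :: "'a list" assume las: "length as = n" and "set as \<subseteq> carr M"
        and h: "holds M \<psi> (xs @ ys @ ts) (as @ cs @ bs)"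
      have meq: "map (\<lambda>i. take (l!k) as ! (l!i)) [0..<k] = map (\<lambda>i. as ! (l!i)) [0..<k]"
        using lmono by (intro map_cong) auto
      have "Gv l (take (l!k) as) cs = Gv l as cs" unfolding Gv_def meq ..
      then show "\<not> lessM M lt (Gv l (take (l!k) as) cs) (as ! (l!k))"
        using key[of as cs] las cs(1) lenys h by simp
    qed
    then show False using ucs by (simp add: n_def)
  qed
  show ?thesis
  proof (rule ccontr)
    assume nu: "\<not> ?thesis"
    have "unbounded M lt n (\<lambda>as. (Phi as \<and> B_tau M lt \<tau> us ss a as) \<or> (\<exists>l\<in>I. P l as))"
      using assms(11)[folded n_def]
    proof (rule unb_mono)
      fix as assume len: "length as = n" and ph: "holds M \<phi> (xs @ ts) (as @ bs)"
      show "(Phi as \<and> B_tau M lt \<tau> us ss a as) \<or> (\<exists>l\<in>I. P l as)"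
      proof (cases "B_tau M lt \<tau> us ss a as")
        case True then show ?thesis using ph by (simp add: Phi_def)
      next
        case False
        then obtain idx sv where idx: "strict_mono_on {..k} idx" "idx k < n"
          and sv: "length sv = length ss" "set sv \<subseteq> carr M" "below M lt sv a"
          and nl: "\<not> lessM M lt (evalv M \<tau> (us @ ss) (map (\<lambda>j. as ! idx j) [0..<k] @ sv)) (as ! idx k)"
          unfolding B_tau_def k_def len by blast
        define l where "l = map idx [0..<Suc k]"
        have lj: "l ! j = idx j" if "j \<le> k" for j using that by (simp add: l_def nth_append)
        have mono: "idx j < idx k" if "j < k" for j
          using idx(1) that by (auto intro: strict_mono_onD)
        have "l \<in> I"
        proof -
          have "set l \<subseteq> {..<n}"
          proof
            fix x assume "x \<in> set l"
            then obtain j where j: "j < Suc k" "x = idx j" by (auto simp: l_def simp del: upt_Suc)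
            then have "j \<le> k" by simp
            have "idx j \<le> idx k" using mono \<open>j \<le> k\<close> by (cases "j = k") (auto intro: less_imp_le)
            then show "x \<in> {..<n}" using idx(2) j(2) by simp
          qed
          moreover have "\<forall>j<k. l!j < l!k" using lj mono by simp
          moreover have "length l = Suc k" by (simp add: l_def)
          ultimately show ?thesis unfolding I_def by blast
        qed
        moreover have meq: "map (\<lambda>j. as ! idx j) [0..<k] = map (\<lambda>i. as ! (l!i)) [0..<k]"
          by (intro map_cong) (auto simp: lj)
        moreover have lk: "l ! k = idx k" using lj by simp
        ultimately have "P l as"
          unfolding P_def Phi_def Gv_def using ph sv nl unfolding meq lk[symmetric]
          by blast
        then show ?thesis using \<open>l \<in> I\<close> by blast
      qed
    qed
    then have "unbounded M lt n (\<lambda>as. Phi as \<and> B_tau M lt \<tau> us ss a as) \<or> unbounded M lt n (\<lambda>as. \<exists>l\<in>I. P l as)"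
      by (rule unb_disj[OF tr tot])
    moreover have "\<not> unbounded M lt n (\<lambda>as. Phi as \<and> B_tau M lt \<tau> us ss a as)"
      using nu unfolding Phi_def n_def .
    ultimately have "unbounded M lt n (\<lambda>as. \<exists>l\<in>I. P l as)" by blast
    then obtain l where "l \<in> I" "unbounded M lt n (P l)" using unb_fin[OF tr tot ne finI] by blast
    then show False using noP by blast
  qed
qed


end
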